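(* If $M=\mathbb R^n$ with the Euclidean metric, then $\dim_{P(\mathit{unc})}(E)=\dim_P(E)$ for every $E\subset\mathbb R^n$.
   Context: $|A|$ denotes diameter. An $\varepsilon$-packing of $E$ is a finite or countable family of pairwise disjoint open balls of diameter $\le\varepsilon$ with centers in $E$; an uncentered $\varepsilon$-packing is the same but with the center condition replaced by "each ball meets $E$". For $\alpha\ge0$: $\mathcal P^\alpha_\varepsilon(E)=\sup\sum_i|E_i|^\alpha$ over $\varepsilon$-packings, $\mathcal P^\alpha_0(E)=\lim_{\varepsilon\to0}\mathcal P^\alpha_\varepsilon(E)$, $\mathcal P^\alpha(E)=\inf\{\sum_j\mathcal P^\alpha_0(E_j):E\subset\bigcup_jE_j\}$ over countable covers, $\dim_P(E)=\inf\{\alpha:\mathcal P^\alpha(E)=0\}$; $\dim_{P(\mathit{unc})}$ is defined identically with uncentered packings. *)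

theory Defs
  imports "HOL-Analysis.Analysis"
begin

definition gen_packing ::
  "('a::metric_space set \<Rightarrow> 'a \<Rightarrow> real \<Rightarrow> bool) \<Rightarrow> real \<Rightarrow> 'a set \<Rightarrow> ('a \<times> real) set \<Rightarrow> bool" where
  "gen_packing adm eps E B \<longleftrightarrow>
     countable B \<and>
     (\<forall>(x,r)\<in>B. 0 < r \<and> diameter (ball x r) \<le> eps \<and> adm E x r) \<and>
     (\<forall>(x,r)\<in>B. \<forall>(y,s)\<in>B. (x,r) \<noteq> (y,s) \<longrightarrow> ball x r \<inter> ball y s = {})"

definition centered :: "'a::metric_space set \<Rightarrow> 'a \<Rightarrow> real \<Rightarrow> bool" where
  "centered E x r \<longleftrightarrow> x \<in> E"

definition uncentered :: "'a::metric_space set \<Rightarrow> 'a \<Rightarrow> real \<Rightarrow> bool" where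
  "uncentered E x r \<longleftrightarrow> ball x r \<inter> E \<noteq> {}"

definition gen_pack_eps ::
  "('a::metric_space set \<Rightarrow> 'a \<Rightarrow> real \<Rightarrow> bool) \<Rightarrow> real \<Rightarrow> real \<Rightarrow> 'a set \<Rightarrow> ennreal" where
  "gen_pack_eps adm \<alpha> eps E =
     (SUP B \<in> {B. gen_packing adm eps E B}.
        infsum (\<lambda>(x,r). ennreal (diameter (ball x r) powr \<alpha>)) B)"

definition gen_pack_0 ::
  "('a::metric_space set \<Rightarrow> 'a \<Rightarrow> real \<Rightarrow> bool) \<Rightarrow> real \<Rightarrow> 'a set \<Rightarrow> ennreal" where
  "gen_pack_0 adm \<alpha> E = Lim (at_right (0::real)) (\<lambda>eps. gen_pack_eps adm \<alpha> eps E)"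

definition gen_pack_measure ::
  "('a::metric_space set \<Rightarrow> 'a \<Rightarrow> real \<Rightarrow> bool) \<Rightarrow> real \<Rightarrow> 'a set \<Rightarrow> ennreal" where
  "gen_pack_measure adm \<alpha> E =
     (INF C \<in> {C :: nat \<Rightarrow> 'a set. E \<subseteq> (\<Union>j. C j)}. (\<Sum>j. gen_pack_0 adm \<alpha> (C j)))"

definition gen_pack_dim ::
  "('a::metric_space set \<Rightarrow> 'a \<Rightarrow> real \<Rightarrow> bool) \<Rightarrow> 'a set \<Rightarrow> ereal" where
  "gen_pack_dim adm E = Inf {ereal \<alpha> | \<alpha>. 0 \<le> \<alpha> \<and> gen_pack_measure adm \<alpha> E = 0}"

definition packing_dim :: "'a::metric_space set \<Rightarrow> ereal" where
  "packing_dim E = gen_pack_dim centered E"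

definition packing_dim_unc :: "'a::metric_space set \<Rightarrow> ereal" where
  "packing_dim_unc E = gen_pack_dim uncentered E"

end

theory Submission imports Defs begin


lemma ball_pairs_mono:
  "(\<forall>(x,r)\<in>B. P x r) \<Longrightarrow> (\<And>x r. P x r \<Longrightarrow> Q x r) \<Longrightarrow> \<forall>(x,r)\<in>B. Q x r"
  by auto

lemma packing_mono_eps:
  assumes "gen_packing adm e F B" "e \<le> e'" shows "gen_packing adm e' F B"
proof -
  from assms(1) have A: "countable B"
     "\<forall>(x,r)\<in>B. 0 < r \<and> diameter (ball x r) \<le> e \<and> adm F x r"
     "\<forall>(x,r)\<in>B. \<forall>(y,s)\<in>B. (x,r) \<noteq> (y,s) \<longrightarrow> ball x r \<inter> ball y s = {}"
    unfolding gen_packing_def by blast+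
  have "\<forall>(x,r)\<in>B. 0 < r \<and> diameter (ball x r) \<le> e' \<and> adm F x r"
    using A(2) by (rule ball_pairs_mono) (use assms(2) in linarith)
  with A show ?thesis unfolding gen_packing_def by blast
qed

lemma pack_eps_mono: "e \<le> e' \<Longrightarrow> gen_pack_eps adm \<alpha> e F \<le> gen_pack_eps adm \<alpha> e' F"
  unfolding gen_pack_eps_def
  by (rule SUP_subset_mono) (auto intro: packing_mono_eps)

lemma centered_imp_unc:
  assumes "gen_packing centered e F B" shows "gen_packing uncentered e F B"
proof -
  from assms have A: "countable B"
     "\<forall>(x,r)\<in>B. 0 < r \<and> diameter (ball x r) \<le> e \<and> centered F x r"
     "\<forall>(x,r)\<in>B. \<forall>(y,s)\<in>B. (x,r) \<noteq> (y,s) \<longrightarrow> ball x r \<inter> ball y s = {}"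
    unfolding gen_packing_def by blast+
  have "\<forall>(x,r)\<in>B. 0 < r \<and> diameter (ball x r) \<le> e \<and> uncentered F x r"
    using A(2) by (rule ball_pairs_mono) (auto simp: centered_def uncentered_def; metis IntI centre_in_ball empty_iff)
  with A show ?thesis unfolding gen_packing_def by blast
qed

lemma pack0_eq: "gen_pack_0 adm \<alpha> F = (INF e\<in>{0<..}. gen_pack_eps adm \<alpha> e F)"
proof -
  let ?g = "\<lambda>e. gen_pack_eps adm \<alpha> e F"
  let ?l = "INF e\<in>{0<..}. ?g e"
  have "(?g \<longlongrightarrow> ?l) (at_right 0)"
  proof (rule decreasing_tendsto)
    show "\<forall>\<^sub>F n in at_right 0. ?l \<le> ?g n"
      unfolding eventually_at_right_field by (intro exI[of _ 1]) (auto intro!: INF_lower)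
    fix x assume "?l < x"
    then obtain e0 where e0: "e0 > 0" "?g e0 < x" by (auto simp: INF_less_iff)
    show "\<forall>\<^sub>F n in at_right 0. ?g n < x"
      unfolding eventually_at_right_field
      using e0 by (intro exI[of _ e0]) (auto, metis le_less_trans less_imp_le pack_eps_mono)
  qed
  then show ?thesis unfolding gen_pack_0_def
    by (intro tendsto_Lim) auto
qed


lemma ennreal_le_mult_Inf:
  fixes x K :: ennreal
  assumes "A \<noteq> {}" "\<And>y. y \<in> A \<Longrightarrow> x \<le> K * y" "K < top"
  shows "x \<le> K * Inf A"
proof (cases "K = 0")
  case True
  with assms obtain y where "y \<in> A" by auto
  with assms True show ?thesis by auto
next
  case False
  then have K0: "K > 0" by (simp add: zero_less_iff_neq_zero)
  have "x / K \<le> Inf A"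
    using assms(2) K0 by (intro Inf_greatest divide_le_posI_ennreal) auto
  then have "x / K * K \<le> Inf A * K" by (rule mult_right_mono) simp
  moreover have "x / K * K = x"
    using False assms(3) by (simp add: ennreal_divide_times)
  ultimately show ?thesis by (simp add: mult.commute)
qed


lemma scale_exists:
  fixes r :: real
  assumes "0 < r" "r \<le> 1"
  shows "\<exists>k::nat. (1/2)^(Suc k) < r \<and> r \<le> (1/2)^k"
proof -
  obtain n :: nat where n: "(1/2)^n < r"
    using real_arch_pow_inv[of r "1/2"] assms by auto
  define m where "m = (LEAST n::nat. (1/2)^n < r)"
  have m: "(1/2)^m < r" unfolding m_def by (rule LeastI[of _ n]) (rule n)
  have "m \<noteq> 0"
  proof
    assume "m = 0" with m assms show False by simp
  qed
  then obtain k where k: "m = Suc k" by (cases m) auto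
  have "\<not> (1/2)^k < r"
  proof
    assume "(1/2)^k < r"
    then have "m \<le> k" unfolding m_def by (rule Least_le)
    with k show False by simp
  qed
  with m k show ?thesis by (auto intro!: exI[of _ k])
qed


lemma max_separated:
  fixes Y :: "'a::metric_space set"
  assumes "finite Y" "d > 0"
  shows "\<exists>S\<subseteq>Y. (\<forall>s\<in>S. \<forall>t\<in>S. s \<noteq> t \<longrightarrow> d \<le> dist s t) \<and> (\<forall>y\<in>Y. \<exists>s\<in>S. dist y s < d)"
proof -
  define P where "P S \<longleftrightarrow> S \<subseteq> Y \<and> (\<forall>s\<in>S. \<forall>t\<in>S. s \<noteq> t \<longrightarrow> d \<le> dist s t)" for S
  define Q where "Q m \<longleftrightarrow> (\<exists>S. P S \<and> card S = m)" for m
  have "\<exists>n. Q n \<and> (\<forall>m. Q m \<longrightarrow> m \<le> n)"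
  proof (rule Nat.ex_has_greatest_nat[of _ 0 "card Y"])
    show "Q 0" unfolding Q_def P_def by (intro exI[of _ "{}"]) simp
    show "\<forall>m. Q m \<longrightarrow> m \<le> card Y" unfolding Q_def P_def using assms by (auto intro: card_mono)
  qed
  then obtain n where n1: "Q n" and n2: "\<And>m. Q m \<Longrightarrow> m \<le> n" by blast
  from n1 obtain S where S: "P S" and cS: "card S = n" unfolding Q_def by blast
  have mx: "card S' \<le> card S" if "P S'" for S'
    using n2[of "card S'"] that cS unfolding Q_def by blast
  have SY: "S \<subseteq> Y" and Ssep: "\<And>s t. s \<in> S \<Longrightarrow> t \<in> S \<Longrightarrow> s \<noteq> t \<Longrightarrow> d \<le> dist s t"
    using S unfolding P_def by auto
  have fS: "finite S" using SY assms finite_subset by blast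
  have "\<forall>y\<in>Y. \<exists>s\<in>S. dist y s < d"
  proof (rule ccontr)
    assume "\<not> (\<forall>y\<in>Y. \<exists>s\<in>S. dist y s < d)"
    then obtain y where y: "y \<in> Y" "\<And>s. s \<in> S \<Longrightarrow> d \<le> dist y s" by (auto simp: not_less)
    have "y \<notin> S"
    proof
      assume "y \<in> S" then have "d \<le> 0" using y(2)[of y] by simp
      with assms show False by simp
    qed
    have "P (insert y S)"
      unfolding P_def
    proof (intro conjI ballI impI)
      show "insert y S \<subseteq> Y" using SY y by blast
      fix s t assume st: "s \<in> insert y S" "t \<in> insert y S" "s \<noteq> t"
      show "d \<le> dist s t"
      proof (cases "s = y")
        case True
        then have "t \<in> S" using st by auto
        then show ?thesis using y(2)[of t] True by simp
      next
        case False
        then have s: "s \<in> S" using st by auto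
        show ?thesis
        proof (cases "t = y")
          case True
          then show ?thesis using y(2)[OF s] by (simp add: dist_commute)
        next
          case False
          then show ?thesis using Ssep[OF s _ st(3)] st by auto
        qed
      qed
    qed
    then have "card (insert y S) \<le> card S" by (rule mx)
    with \<open>y \<notin> S\<close> fS show False by simp
  qed
  with SY Ssep show ?thesis by blast
qed


lemma count_balls:
  fixes s :: "'a::euclidean_space" and T :: "('a \<times> real) set"
  assumes fin: "finite T" and a: "a > 0"
    and rad: "\<And>x r. (x,r) \<in> T \<Longrightarrow> a < r \<and> dist s x < 4*a"
    and disj: "\<And>p q. p \<in> T \<Longrightarrow> q \<in> T \<Longrightarrow> p \<noteq> q \<Longrightarrow> ball (fst p) (snd p) \<inter> ball (fst q) (snd q) = {}"
  shows "card T \<le> 5 ^ DIM('a)"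
proof -
  define b where "b p = ball (fst p) a" for p :: "'a \<times> real"
  define v where "v = measure lborel (ball (0::'a) 1)"
  have v: "v > 0" unfolding v_def by (rule content_ball_pos) simp
  have sub: "b p \<subseteq> ball (fst p) (snd p)" if "p \<in> T" for p
    using rad[of "fst p" "snd p"] that unfolding b_def by (auto simp: subset_ball)
  have dj: "disjoint_family_on b T"
    unfolding disjoint_family_on_def
  proof (intro ballI impI)
    fix p q assume "p \<in> T" "q \<in> T" "p \<noteq> q"
    then show "b p \<inter> b q = {}" using disj[of p q] sub[of p] sub[of q] by blast
  qed
  have fm: "b p \<in> fmeasurable lborel" for p
    unfolding b_def by (intro fmeasurableI) (auto simp: emeasure_lborel_ball_finite[unfolded infinity_ennreal_def])
  have "measure lborel (\<Union>p\<in>T. b p) = (\<Sum>p\<in>T. measure lborel (b p))"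
    using fin dj by (intro measure_finite_Union) (auto simp: b_def[symmetric] simp del: b_def, auto simp: b_def emeasure_lborel_ball_finite[unfolded infinity_ennreal_def, THEN less_imp_neq])
  also have "\<dots> = (\<Sum>p\<in>T. a ^ DIM('a) * v)"
    unfolding b_def v_def using a by (intro sum.cong refl content_ball_conv_unit_ball) simp
  also have "\<dots> = card T * (a ^ DIM('a) * v)" by simp
  finally have eq: "measure lborel (\<Union>p\<in>T. b p) = card T * (a ^ DIM('a) * v)" .
  have "(\<Union>p\<in>T. b p) \<subseteq> ball s (5*a)"
  proof
    fix z assume "z \<in> (\<Union>p\<in>T. b p)"
    then obtain x r where xr: "(x,r) \<in> T" "dist x z < a" by (auto simp: b_def)
    have "dist s z \<le> dist s x + dist x z" by (rule dist_triangle)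
    also have "\<dots> < 5*a" using rad[OF xr(1)] xr(2) by simp
    finally show "z \<in> ball s (5*a)" by simp
  qed
  then have "measure lborel (\<Union>p\<in>T. b p) \<le> measure lborel (ball s (5*a))"
    by (intro measure_mono_fmeasurable) (auto intro!: fmeasurableI sets.finite_UN simp: b_def fin emeasure_lborel_ball_finite[unfolded infinity_ennreal_def])
  also have "\<dots> = (5*a) ^ DIM('a) * v"
    unfolding v_def using a by (intro content_ball_conv_unit_ball) simp
  finally have "card T * (a ^ DIM('a) * v) \<le> 5 ^ DIM('a) * (a ^ DIM('a) * v)"
    using eq by (simp add: power_mult_distrib mult_ac)
  moreover have "a ^ DIM('a) * v > 0" using a v by simp
  ultimately have "real (card T) \<le> 5 ^ DIM('a)" by (simp add: mult_le_cancel_right)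
  then show ?thesis by (simp add: of_nat_le_iff[symmetric] del: of_nat_le_iff)
qed

lemma half_pow_powr: "((1/2::real)^j) powr t = ((1/2) powr t)^j"
proof -
  have "((1/2::real)^j) powr t = ((1/2) powr (real j)) powr t" by (simp add: powr_realpow)
  also have "\<dots> = (1/2) powr (real j * t)" by (simp add: powr_powr)
  also have "\<dots> = ((1/2) powr t)^j" by (simp add: powr_power)
  finally show ?thesis .
qed
lemma geo_bound:
  fixes q :: real assumes "0 \<le> q" "q < 1" "finite K"
  shows "(\<Sum>j\<in>K. q^j) \<le> 1 / (1 - q)"
proof -
  have "(\<Sum>j\<in>K. q^j) \<le> (\<Sum>j. q^j)"
    using assms by (intro sum_le_suminf summable_geometric) auto
  also have "\<dots> = 1/(1-q)" using assms by (intro suminf_geometric) auto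
  finally show ?thesis .
qed
lemma q_less: "0 < t \<Longrightarrow> (1/2::real) powr t < 1"
  using powr_less_mono2[of t "1/2" 1] by simp

lemma finite_main:
  fixes F :: "'a::euclidean_space set" and B :: "('a \<times> real) set"
  assumes fin: "finite B" and pk: "gen_packing uncentered e F B" and e1: "e \<le> 1"
    and a0: "0 \<le> \<alpha>" and ag: "\<alpha> < \<gamma>"
  shows "(\<Sum>p\<in>B. (\<lambda>(x,r). ennreal (diameter (ball x r) powr \<gamma>)) p)
     \<le> ennreal (5 ^ DIM('a) * 2 powr \<gamma> / (1 - (1/2) powr (\<gamma> - \<alpha>))) * gen_pack_eps centered \<alpha> e F"
proof -
  define q where "q = (1/2::real) powr (\<gamma> - \<alpha>)"
  define N :: nat where "N = 5 ^ DIM('a)"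
  define c where "c = real N * 2 powr \<gamma>"
  define P where "P = gen_pack_eps centered \<alpha> e F"
  have q0: "0 \<le> q" and q1: "q < 1" using q_less[of "\<gamma> - \<alpha>"] ag by (auto simp: q_def)
  have c0: "c \<ge> 0" by (simp add: c_def)
  have hB: "0 < snd p \<and> 2 * snd p \<le> e \<and> ball (fst p) (snd p) \<inter> F \<noteq> {}" if "p \<in> B" for p
    using pk that unfolding gen_packing_def uncentered_def by (cases p) auto
  have disjB: "ball (fst p) (snd p) \<inter> ball (fst p') (snd p') = {}" if "p \<in> B" "p' \<in> B" "p \<noteq> p'" for p p'
  proof -
    have D: "\<forall>(x,r)\<in>B. \<forall>(y,s)\<in>B. (x,r) \<noteq> (y,s) \<longrightarrow> ball x r \<inter> ball y s = {}"
      using pk unfolding gen_packing_def by (elim conjE)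
    then have "\<forall>p\<in>B. \<forall>p'\<in>B. p \<noteq> p' \<longrightarrow> ball (fst p) (snd p) \<inter> ball (fst p') (snd p') = {}"
      by (simp add: case_prod_beta prod_eq_iff)
    with that show ?thesis by blast
  qed
  have "\<forall>p\<in>B. \<exists>z. z \<in> ball (fst p) (snd p) \<and> z \<in> F" using hB by blast
  then obtain y where y: "\<And>p. p \<in> B \<Longrightarrow> y p \<in> ball (fst p) (snd p) \<and> y p \<in> F" by metis
  have "\<forall>p\<in>B. \<exists>j::nat. (1/2)^(Suc j) < snd p \<and> snd p \<le> (1/2)^j"
    using hB e1 by (intro ballI scale_exists) (auto, smt (verit))
  then obtain k where k: "\<And>p. p \<in> B \<Longrightarrow> (1/2)^(Suc (k p)) < snd p \<and> snd p \<le> (1/2)^(k p)" by metis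
  define g :: "'a \<times> real \<Rightarrow> real" where "g p = (2 * snd p) powr \<gamma>" for p
  have sum_eq: "(\<Sum>p\<in>B. (\<lambda>(x,r). ennreal (diameter (ball x r) powr \<gamma>)) p) = (\<Sum>p\<in>B. ennreal (g p))"
    using hB by (intro sum.cong refl) (fastforce simp: g_def split: prod.splits)
  have perk: "(\<Sum>p\<in>{p\<in>B. k p = j}. ennreal (g p)) \<le> ennreal (c * q^j) * P" for j
  proof -
    define Bj where "Bj = {p\<in>B. k p = j}"
    define a :: real where "a = (1/2)^(Suc j)"
    have a0: "a > 0" by (simp add: a_def)
    have finBj: "finite Bj" using fin by (simp add: Bj_def)
    have rBj: "a < snd p \<and> snd p \<le> 2*a" if "p \<in> Bj" for p
      using k[of p] that by (auto simp: Bj_def a_def)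
    have "finite (y ` Bj)" using finBj by simp
    from max_separated[OF this, of "2*a"] a0 obtain S where
      SY: "S \<subseteq> y ` Bj" and Ssep: "\<And>s t. s \<in> S \<Longrightarrow> t \<in> S \<Longrightarrow> s \<noteq> t \<Longrightarrow> 2*a \<le> dist s t"
      and Scov: "\<And>z. z \<in> y ` Bj \<Longrightarrow> \<exists>s\<in>S. dist z s < 2*a" by (auto 0 0) blast
    have finS: "finite S" using SY finBj finite_subset by blast
    have cardT: "card {p\<in>Bj. dist (y p) s < 2*a} \<le> N" for s
      unfolding N_def
    proof (rule count_balls[of _ a s])
      show "finite {p\<in>Bj. dist (y p) s < 2*a}" using finBj by simp
      show "a > 0" by (rule a0)
      fix x r assume xr: "(x, r) \<in> {p\<in>Bj. dist (y p) s < 2*a}"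
      then have inB: "(x,r) \<in> B" by (auto simp: Bj_def)
      have "dist s x \<le> dist s (y (x,r)) + dist (y (x,r)) x" by (rule dist_triangle)
      also have "\<dots> < 2*a + r" using xr y[OF inB] by (auto simp: dist_commute)
      also have "\<dots> \<le> 4*a" using rBj[of "(x,r)"] xr by auto
      finally show "a < r \<and> dist s x < 4*a" using rBj[of "(x,r)"] xr by auto
    next
      fix p p' assume "p \<in> {p\<in>Bj. dist (y p) s < 2*a}" "p' \<in> {p\<in>Bj. dist (y p) s < 2*a}" "p \<noteq> p'"
      then show "ball (fst p) (snd p) \<inter> ball (fst p') (snd p') = {}"
        by (intro disjB) (auto simp: Bj_def)
    qed
    have "Bj \<subseteq> (\<Union>s\<in>S. {p\<in>Bj. dist (y p) s < 2*a})"
      using Scov by blast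
    then have "card Bj \<le> card (\<Union>s\<in>S. {p\<in>Bj. dist (y p) s < 2*a})"
      using finBj finS by (intro card_mono) auto
    also have "\<dots> \<le> (\<Sum>s\<in>S. card {p\<in>Bj. dist (y p) s < 2*a})"
      using finS by (rule card_UN_le)
    also have "\<dots> \<le> (\<Sum>s\<in>S. N)" using cardT by (intro sum_mono) auto
    finally have cardBj: "card Bj \<le> N * card S" by (simp add: mult.commute)
    have "(\<Sum>p\<in>Bj. g p) \<le> card Bj * (4*a) powr \<gamma>"
    proof (rule sum_bounded_above)
      fix p assume "p \<in> Bj"
      then show "g p \<le> (4*a) powr \<gamma>"
        using rBj[of p] a0 ag a0 \<open>0 \<le> \<alpha>\<close> unfolding g_def by (intro powr_mono2) auto
    qed
    also have "\<dots> \<le> (N * card S) * (4*a) powr \<gamma>"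
      using cardBj by (intro mult_right_mono) (auto simp flip: of_nat_mult)
    also have "(4*a) powr \<gamma> = 2 powr \<gamma> * (q^j * ((1/2)^j) powr \<alpha>)"
    proof -
      have "(4*a) powr \<gamma> = 2 powr \<gamma> * ((1/2)^j) powr \<gamma>"
        by (simp add: a_def powr_mult[symmetric])
      also have "((1/2::real)^j) powr \<gamma> = ((1/2)^j) powr (\<gamma> - \<alpha>) * ((1/2)^j) powr \<alpha>"
        by (simp add: powr_add[symmetric])
      also have "((1/2::real)^j) powr (\<gamma> - \<alpha>) = q^j" by (simp add: half_pow_powr q_def)
      finally show ?thesis .
    qed
    finally have bnd: "(\<Sum>p\<in>Bj. g p) \<le> (c * q^j) * (card S * ((1/2)^j) powr \<alpha>)"
      by (simp add: c_def mult_ac)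
    have cpk: "ennreal (card S * ((1/2)^j) powr \<alpha>) \<le> P"
    proof -
      define Bc where "Bc = (\<lambda>s. (s, a)) ` S"
      have "gen_packing centered e F Bc"
        unfolding gen_packing_def centered_def
      proof (intro conjI ballI)
        show "countable Bc" using finS by (simp add: Bc_def countable_finite)
      next
        fix pr assume "pr \<in> Bc"
        then obtain s where s: "s \<in> S" "pr = (s, a)" by (auto simp: Bc_def)
        then obtain p where p: "p \<in> Bj" "s = y p" using SY by auto
        have "p \<in> B" using p by (simp add: Bj_def)
        show "case pr of (x, r) \<Rightarrow> 0 < r \<and> diameter (ball x r) \<le> e \<and> x \<in> F"
          using s p rBj[OF p(1)] hB[OF \<open>p \<in> B\<close>] y[OF \<open>p \<in> B\<close>] a0 by auto
      next
        fix pr assume "pr \<in> Bc"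
        then obtain s where s: "s \<in> S" "pr = (s, a)" by (auto simp: Bc_def)
        have "\<forall>t\<in>S. s \<noteq> t \<longrightarrow> ball s a \<inter> ball t a = {}"
        proof (intro ballI impI)
          fix t assume t: "t \<in> S" "s \<noteq> t"
          have st: "2*a \<le> dist s t" using Ssep[OF s(1) t(1) t(2)] .
          show "ball s a \<inter> ball t a = {}"
          proof (rule ccontr)
            assume "ball s a \<inter> ball t a \<noteq> {}"
            then obtain z where z: "dist s z < a" "dist t z < a" by auto
            have "dist s t \<le> dist s z + dist z t" by (rule dist_triangle)
            with z st show False by (simp add: dist_commute)
          qed
        qed
        then show "case pr of (x, r) \<Rightarrow> \<forall>(y, s)\<in>Bc. (x, r) \<noteq> (y, s) \<longrightarrow> ball x r \<inter> ball y s = {}"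
          using s by (auto simp: Bc_def)
      qed
      then have "infsum (\<lambda>(x,r). ennreal (diameter (ball x r) powr \<alpha>)) Bc \<le> P"
        unfolding P_def gen_pack_eps_def by (intro SUP_upper) simp
      moreover have "infsum (\<lambda>(x,r). ennreal (diameter (ball x r) powr \<alpha>)) Bc
          = ennreal (card S * ((1/2)^j) powr \<alpha>)"
      proof -
        have "infsum (\<lambda>(x,r). ennreal (diameter (ball x r) powr \<alpha>)) Bc
           = (\<Sum>pr\<in>Bc. (\<lambda>(x,r). ennreal (diameter (ball x r) powr \<alpha>)) pr)"
          using finS by (simp add: Bc_def)
        also have "\<dots> = (\<Sum>s\<in>S. ennreal ((2*a) powr \<alpha>))"
          unfolding Bc_def using a0 by (subst sum.reindex) (auto simp: inj_on_def)
        also have "\<dots> = ennreal (card S * ((1/2)^j) powr \<alpha>)"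
          by (simp add: a_def ennreal_mult' ennreal_of_nat_eq_real_of_nat)
        finally show ?thesis .
      qed
      ultimately show ?thesis by simp
    qed
    have "(\<Sum>p\<in>Bj. ennreal (g p)) = ennreal (\<Sum>p\<in>Bj. g p)"
      by (intro sum_ennreal) (simp add: g_def)
    also have "\<dots> \<le> ennreal ((c * q^j) * (card S * ((1/2)^j) powr \<alpha>))"
      using bnd by (rule ennreal_leI)
    also have "\<dots> = ennreal (c * q^j) * ennreal (card S * ((1/2)^j) powr \<alpha>)"
      using c0 q0 by (simp add: ennreal_mult)
    also have "\<dots> \<le> ennreal (c * q^j) * P"
      using cpk by (rule mult_left_mono) simp
    finally show ?thesis by (simp add: Bj_def)
  qed
  have "(\<Sum>p\<in>B. ennreal (g p)) = (\<Sum>j\<in>k ` B. \<Sum>p\<in>{p\<in>B. k p = j}. ennreal (g p))"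
    using fin by (intro sum.group[symmetric]) auto
  also have "\<dots> \<le> (\<Sum>j\<in>k ` B. ennreal (c * q^j) * P)"
    using perk by (intro sum_mono)
  also have "\<dots> = ennreal (\<Sum>j\<in>k ` B. c * q^j) * P"
    using c0 q0 by (simp add: sum_distrib_right[symmetric] sum_ennreal)
  also have "\<dots> \<le> ennreal (c * (1 / (1 - q))) * P"
    using geo_bound[OF q0 q1, of "k ` B"] fin c0
    by (intro mult_right_mono ennreal_leI) (auto simp: sum_distrib_left[symmetric] dest: mult_left_mono[of _ _ c])
  finally show ?thesis
    using sum_eq by (simp add: c_def N_def q_def P_def)
qed

lemma ball_pairs_subset:
  "(\<forall>(x,r)\<in>B. P x r) \<Longrightarrow> B' \<subseteq> B \<Longrightarrow> \<forall>(x,r)\<in>B'. P x r"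
  by auto

lemma packing_subset:
  assumes "gen_packing adm e F B" "B' \<subseteq> B" shows "gen_packing adm e F B'"
proof -
  from assms(1) have A: "countable B"
     "\<forall>(x,r)\<in>B. 0 < r \<and> diameter (ball x r) \<le> e \<and> adm F x r"
     "\<forall>(x,r)\<in>B. \<forall>(y,s)\<in>B. (x,r) \<noteq> (y,s) \<longrightarrow> ball x r \<inter> ball y s = {}"
    unfolding gen_packing_def by blast+
  have 1: "countable B'" using A(1) assms(2) by (rule countable_subset[rotated])
  have 2: "\<forall>(x,r)\<in>B'. 0 < r \<and> diameter (ball x r) \<le> e \<and> adm F x r"
    using A(2) assms(2) by (rule ball_pairs_subset)
  have "\<forall>(x,r)\<in>B'. \<forall>(y,s)\<in>B. (x,r) \<noteq> (y,s) \<longrightarrow> ball x r \<inter> ball y s = {}"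
    using A(3) assms(2) by (rule ball_pairs_subset)
  then have 3: "\<forall>(x,r)\<in>B'. \<forall>(y,s)\<in>B'. (x,r) \<noteq> (y,s) \<longrightarrow> ball x r \<inter> ball y s = {}"
    by (rule ball_pairs_mono) (rule ball_pairs_subset[OF _ assms(2)])
  from 1 2 3 show ?thesis unfolding gen_packing_def by blast
qed

lemma eps_main:
  fixes F :: "'a::euclidean_space set"
  assumes e: "0 < e" "e \<le> 1" and a0: "0 \<le> \<alpha>" and ag: "\<alpha> < \<gamma>"
  shows "gen_pack_eps uncentered \<gamma> e F
     \<le> ennreal (5 ^ DIM('a) * 2 powr \<gamma> / (1 - (1/2) powr (\<gamma> - \<alpha>))) * gen_pack_eps centered \<alpha> e F"
  unfolding gen_pack_eps_def[of uncentered]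
proof (rule SUP_least)
  fix B assume B: "B \<in> {B. gen_packing uncentered e F B}"
  show "infsum (\<lambda>(x,r). ennreal (diameter (ball x r) powr \<gamma>)) B
     \<le> ennreal (5 ^ DIM('a) * 2 powr \<gamma> / (1 - (1/2) powr (\<gamma> - \<alpha>))) * gen_pack_eps centered \<alpha> e F"
    unfolding nonneg_infsum_complete[of B "\<lambda>(x,r). ennreal (diameter (ball x r) powr \<gamma>)", OF zero_le]
  proof (rule SUP_least)
    fix B' assume "B' \<in> {F. finite F \<and> F \<subseteq> B}"
    then have "finite B'" "B' \<subseteq> B" by (simp_all only: mem_Collect_eq)
    then have "gen_packing uncentered e F B'" using B packing_subset[of uncentered e F B B'] by simp
    then show "(\<Sum>p\<in>B'. (\<lambda>(x,r). ennreal (diameter (ball x r) powr \<gamma>)) p)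
     \<le> ennreal (5 ^ DIM('a) * 2 powr \<gamma> / (1 - (1/2) powr (\<gamma> - \<alpha>))) * gen_pack_eps centered \<alpha> e F"
      using finite_main[of B' e F \<alpha> \<gamma>] \<open>finite B'\<close> e a0 ag by simp
  qed
qed

lemma P0_main:
  fixes F :: "'a::euclidean_space set"
  assumes a0: "0 \<le> \<alpha>" and ag: "\<alpha> < \<gamma>"
  shows "gen_pack_0 uncentered \<gamma> F
     \<le> ennreal (5 ^ DIM('a) * 2 powr \<gamma> / (1 - (1/2) powr (\<gamma> - \<alpha>))) * gen_pack_0 centered \<alpha> F"
  unfolding pack0_eq
proof (rule ennreal_le_mult_Inf)
  show "(\<lambda>e. gen_pack_eps centered \<alpha> e F) ` {0<..} \<noteq> {}" by auto
  show "ennreal (5 ^ DIM('a) * 2 powr \<gamma> / (1 - (1/2) powr (\<gamma> - \<alpha>))) < top" by simp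
  fix z assume "z \<in> (\<lambda>e. gen_pack_eps centered \<alpha> e F) ` {0<..}"
  then obtain e where e: "e > 0" "z = gen_pack_eps centered \<alpha> e F" by auto
  have "(INF e\<in>{0<..}. gen_pack_eps uncentered \<gamma> e F) \<le> gen_pack_eps uncentered \<gamma> (min e 1) F"
    using e by (intro INF_lower) auto
  also have "\<dots> \<le> ennreal (5 ^ DIM('a) * 2 powr \<gamma> / (1 - (1/2) powr (\<gamma> - \<alpha>))) * gen_pack_eps centered \<alpha> (min e 1) F"
    using e a0 ag by (intro eps_main) auto
  also have "\<dots> \<le> ennreal (5 ^ DIM('a) * 2 powr \<gamma> / (1 - (1/2) powr (\<gamma> - \<alpha>))) * z"
    unfolding e(2) by (intro mult_left_mono pack_eps_mono) auto
  finally show "(INF e\<in>{0<..}. gen_pack_eps uncentered \<gamma> e F) \<le> ennreal (5 ^ DIM('a) * 2 powr \<gamma> / (1 - (1/2) powr (\<gamma> - \<alpha>))) * z" .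
qed

lemma meas_main:
  fixes E :: "'a::euclidean_space set"
  assumes a0: "0 \<le> \<alpha>" and ag: "\<alpha> < \<gamma>"
  shows "gen_pack_measure uncentered \<gamma> E
     \<le> ennreal (5 ^ DIM('a) * 2 powr \<gamma> / (1 - (1/2) powr (\<gamma> - \<alpha>))) * gen_pack_measure centered \<alpha> E"
  unfolding gen_pack_measure_def[of centered]
proof (rule ennreal_le_mult_Inf)
  let ?K = "ennreal (5 ^ DIM('a) * 2 powr \<gamma> / (1 - (1/2) powr (\<gamma> - \<alpha>)))"
  show "(\<lambda>C. \<Sum>j. gen_pack_0 centered \<alpha> (C j)) ` {C. E \<subseteq> (\<Union>j. C j)} \<noteq> {}"
    by (auto intro!: exI[of _ "\<lambda>_. UNIV"])
  show "?K < top" by simp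
  fix z assume "z \<in> (\<lambda>C. \<Sum>j. gen_pack_0 centered \<alpha> (C j)) ` {C. E \<subseteq> (\<Union>j. C j)}"
  then obtain C :: "nat \<Rightarrow> 'a set" where C: "E \<subseteq> (\<Union>j. C j)" "z = (\<Sum>j. gen_pack_0 centered \<alpha> (C j))" by auto
  have "gen_pack_measure uncentered \<gamma> E \<le> (\<Sum>j. gen_pack_0 uncentered \<gamma> (C j))"
    unfolding gen_pack_measure_def using C by (intro INF_lower) auto
  also have "\<dots> \<le> (\<Sum>j. ?K * gen_pack_0 centered \<alpha> (C j))"
    using a0 ag by (intro suminf_le P0_main summableI)
  also have "\<dots> = ?K * z" using C by simp
  finally show "gen_pack_measure uncentered \<gamma> E \<le> ?K * z" .
qed

lemma meas_mono:
  fixes E :: "'a::metric_space set"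
  shows "gen_pack_measure centered \<alpha> E \<le> gen_pack_measure uncentered \<alpha> E"
  unfolding gen_pack_measure_def
proof (intro INF_mono bexI)
  fix C :: "nat \<Rightarrow> 'a set" assume C: "C \<in> {C. E \<subseteq> (\<Union>j. C j)}"
  show "(\<Sum>j. gen_pack_0 centered \<alpha> (C j)) \<le> (\<Sum>j. gen_pack_0 uncentered \<alpha> (C j))"
  proof (intro suminf_le summableI)
    fix j
    show "gen_pack_0 centered \<alpha> (C j) \<le> gen_pack_0 uncentered \<alpha> (C j)"
      unfolding pack0_eq gen_pack_eps_def
      by (intro INF_mono bexI SUP_subset_mono) (auto intro: centered_imp_unc)
  qed
  show "C \<in> {C. E \<subseteq> (\<Union>j. C j)}" by (rule C)
qed

theorem corollary1:
  fixes E :: "(real ^ 'n) set"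
  shows "packing_dim_unc E = packing_dim E"
proof -
  let ?Su = "{ereal \<alpha> | \<alpha>. 0 \<le> \<alpha> \<and> gen_pack_measure uncentered \<alpha> E = 0}"
  let ?Sc = "{ereal \<alpha> | \<alpha>. 0 \<le> \<alpha> \<and> gen_pack_measure centered \<alpha> E = 0}"
  have "?Su \<subseteq> ?Sc"
  proof
    fix x assume "x \<in> ?Su"
    then obtain \<alpha> where "x = ereal \<alpha>" "0 \<le> \<alpha>" "gen_pack_measure uncentered \<alpha> E = 0" by auto
    moreover then have "gen_pack_measure centered \<alpha> E = 0"
      using meas_mono[of \<alpha> E] by simp
    ultimately show "x \<in> ?Sc" by auto
  qed
  then have le1: "Inf ?Sc \<le> Inf ?Su" by (rule Inf_superset_mono)
  have le2: "Inf ?Su \<le> Inf ?Sc"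
  proof (rule Inf_greatest)
    fix x assume "x \<in> ?Sc"
    then obtain \<alpha> where x: "x = ereal \<alpha>" "0 \<le> \<alpha>" "gen_pack_measure centered \<alpha> E = 0" by auto
    show "Inf ?Su \<le> x" unfolding x(1)
    proof (rule ereal_le_epsilon2)
      fix d :: real assume d: "0 < d"
      have "gen_pack_measure uncentered (\<alpha> + d) E \<le> 0"
        using meas_main[of \<alpha> "\<alpha> + d" E] x d by simp
      then have "ereal (\<alpha> + d) \<in> ?Su" using x d by auto
      then have "Inf ?Su \<le> ereal (\<alpha> + d)" by (rule Inf_lower)
      then show "Inf ?Su \<le> ereal \<alpha> + ereal d" by simp
    qed
  qed
  show ?thesis
    unfolding packing_dim_def packing_dim_unc_def gen_pack_dim_def
    using le1 le2 by (rule antisym[rotated])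
qed
end
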